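(* Fix $\varepsilon\in(0,1)$, $n\ge2$, and suppose $\boldsymbol{X}\sim P(n,\tau,\mu_{\mathrm{L}},\mu_{\mathrm{R}})$ for some $\tau\in[n-1]$ and $\mu_{\mathrm{L}},\mu_{\mathrm{R}}\in\mathbb{R}$; let $\eta=\tau/n$. (a) If $\mu_{\mathrm{L}}=\mu_{\mathrm{R}}$, then $\mathbb{P}\{\max_{t\in T_0}|\boldsymbol{v}_t^\top\boldsymbol{X}|>\sqrt{2\log(|T_0|/\varepsilon)}\}\le\varepsilon$. (b) If $|\mu_{\mathrm{L}}-\mu_{\mathrm{R}}|\sqrt{\eta(1-\eta)}>\sqrt{24\log(|T_0|/\varepsilon)/n}$, then $\mathbb{P}\{\max_{t\in T_0}|\boldsymbol{v}_t^\top\boldsymbol{X}|\le\sqrt{2\log(|T_0|/\varepsilon)}\}\le\varepsilon$.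
   Context: $P(n,\tau,\mu_{\mathrm{L}},\mu_{\mathrm{R}})$ is the law of $N_n(\boldsymbol{\mu},I_n)$ with $\mu_i=\mu_{\mathrm{L}}\mathbb{1}\{i\le\tau\}+\mu_{\mathrm{R}}\mathbb{1}\{i>\tau\}$. For $t\in[n-1]$, $\boldsymbol{v}_t=\bigl(\sqrt{\tfrac{n-t}{tn}}\boldsymbol{1}_t^\top,-\sqrt{\tfrac{t}{(n-t)n}}\boldsymbol{1}_{n-t}^\top\bigr)^\top$. With $Q=\lfloor\log_2(n/2)\rfloor$, $T_0=\{2^q:0\le q\le Q\}\cup\{n-2^q:0\le q\le Q\}$. *)

theory Defs
  imports "HOL-Probability.Probability"
begin

text \<open>Coordinates are indexed by 1..n; vectors are functions nat => real.\<close>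

definition cp_mean :: "nat \<Rightarrow> real \<Rightarrow> real \<Rightarrow> nat \<Rightarrow> real" where
  "cp_mean \<tau> \<mu>L \<mu>R i = (if i \<le> \<tau> then \<mu>L else \<mu>R)"

definition cp_law :: "nat \<Rightarrow> nat \<Rightarrow> real \<Rightarrow> real \<Rightarrow> (nat \<Rightarrow> real) measure" where
  "cp_law n \<tau> \<mu>L \<mu>R =
     (\<Pi>\<^sub>M i\<in>{1..n}. density lborel (normal_density (cp_mean \<tau> \<mu>L \<mu>R i) 1))"

definition cp_v :: "nat \<Rightarrow> nat \<Rightarrow> nat \<Rightarrow> real" where
  "cp_v n t i = (if i \<le> t then sqrt ((real n - real t) / (real t * real n))
                 else - sqrt (real t / ((real n - real t) * real n)))"

definition cp_inner :: "nat \<Rightarrow> nat \<Rightarrow> (nat \<Rightarrow> real) \<Rightarrow> real" where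
  "cp_inner n t x = (\<Sum>i=1..n. cp_v n t i * x i)"

definition cp_Q :: "nat \<Rightarrow> nat" where
  "cp_Q n = nat \<lfloor>log 2 (real n / 2)\<rfloor>"

definition cp_T0 :: "nat \<Rightarrow> nat set" where
  "cp_T0 n = {2 ^ q | q. q \<le> cp_Q n} \<union> {n - 2 ^ q | q. q \<le> cp_Q n}"

definition cp_stat :: "nat \<Rightarrow> (nat \<Rightarrow> real) \<Rightarrow> real" where
  "cp_stat n x = Max ((\<lambda>t. \<bar>cp_inner n t x\<bar>) ` cp_T0 n)"

end

theory Submission
  imports Defs
begin

lemma cp_law_prob: "prob_space (cp_law n \<tau> \<mu>L \<mu>R)"
  unfolding cp_law_def by (rule prob_space_PiM) (rule prob_space_normal_density, simp)

lemma cp_coord_distr: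
  assumes "i \<in> {1..n}"
  shows "distr (cp_law n \<tau> \<mu>L \<mu>R) (density lborel (normal_density (cp_mean \<tau> \<mu>L \<mu>R i) 1)) (\<lambda>x. x i)
       = density lborel (normal_density (cp_mean \<tau> \<mu>L \<mu>R i) 1)"
  unfolding cp_law_def
  by (rule distr_PiM_component[OF prob_space_normal_density assms]) simp

lemma cp_indep:
  "n \<noteq> 0 \<Longrightarrow> prob_space.indep_vars (cp_law n \<tau> \<mu>L \<mu>R) (\<lambda>i. density lborel (normal_density (cp_mean \<tau> \<mu>L \<mu>R i) 1)) (\<lambda>i x. x i) {1..n}"
proof -
  assume False: "n \<noteq> 0"
  interpret prob_space "cp_law n \<tau> \<mu>L \<mu>R" by (rule cp_law_prob)
  let ?N = "\<lambda>i. density lborel (normal_density (cp_mean \<tau> \<mu>L \<mu>R i) 1)"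
  have rv: "random_variable (?N i) (\<lambda>x. x i)" if "i \<in> {1..n}" for i
    using that unfolding cp_law_def by (rule measurable_component_singleton)
  have "distr (cp_law n \<tau> \<mu>L \<mu>R) (\<Pi>\<^sub>M i\<in>{1..n}. ?N i) (\<lambda>x. \<lambda>i\<in>{1..n}. x i) =
        distr (cp_law n \<tau> \<mu>L \<mu>R) (cp_law n \<tau> \<mu>L \<mu>R) (\<lambda>x. x)"
    by (rule distr_cong) (auto simp: cp_law_def space_PiM PiE_def extensional_def restrict_def)
  also have "\<dots> = cp_law n \<tau> \<mu>L \<mu>R" by simp
  also have "\<dots> = (\<Pi>\<^sub>M i\<in>{1..n}. distr (cp_law n \<tau> \<mu>L \<mu>R) (?N i) (\<lambda>x. x i))"
    unfolding cp_law_def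
    by (rule PiM_cong[OF refl]) (metis cp_coord_distr cp_law_def)
  finally show ?thesis
    using indep_vars_iff_distr_eq_PiM'[where I="{1..n}" and M'="?N" and X="\<lambda>i x. x i"] rv False by auto
qed

lemma cp_coord_distributed:
  assumes "i \<in> {1..n}"
  shows "distributed (cp_law n \<tau> \<mu>L \<mu>R) lborel (\<lambda>x. x i) (normal_density (cp_mean \<tau> \<mu>L \<mu>R i) 1)"
proof -
  let ?N = "density lborel (normal_density (cp_mean \<tau> \<mu>L \<mu>R i) 1)"
  have m: "(\<lambda>x. x i) \<in> measurable (cp_law n \<tau> \<mu>L \<mu>R) ?N"
    using assms unfolding cp_law_def by (rule measurable_component_singleton)
  have "distr (cp_law n \<tau> \<mu>L \<mu>R) lborel (\<lambda>x. x i) = distr (cp_law n \<tau> \<mu>L \<mu>R) ?N (\<lambda>x. x i)"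
    by (rule distr_cong) auto
  also have "\<dots> = ?N" by (rule cp_coord_distr[OF assms])
  finally show ?thesis unfolding distributed_def using m
    by (auto simp: measurable_cong_sets[OF refl sets_density])
qed

lemma cp_lin:
  assumes n: "n \<noteq> 0" and a: "\<And>i. i \<in> {1..n} \<Longrightarrow> a i \<noteq> 0"
  shows "distributed (cp_law n \<tau> \<mu>L \<mu>R) lborel (\<lambda>x. \<Sum>i\<in>{1..n}. a i * x i)
     (normal_density (\<Sum>i\<in>{1..n}. a i * cp_mean \<tau> \<mu>L \<mu>R i) (sqrt (\<Sum>i\<in>{1..n}. (\<bar>a i\<bar>)\<^sup>2)))"
proof -
  interpret prob_space "cp_law n \<tau> \<mu>L \<mu>R" by (rule cp_law_prob)
  have ind: "indep_vars (\<lambda>i. borel) (\<lambda>i x. a i * x i) {1..n}"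
    using indep_vars_compose2[OF cp_indep[OF n], of "\<lambda>i y. a i * y" "\<lambda>i. borel"]
    by (auto simp: measurable_cong_sets[OF sets_density refl])
  have d: "distributed (cp_law n \<tau> \<mu>L \<mu>R) lborel (\<lambda>x. a i * x i) (normal_density (a i * cp_mean \<tau> \<mu>L \<mu>R i) \<bar>a i\<bar>)"
    if "i \<in> {1..n}" for i
    using normal_density_affine[OF cp_coord_distributed[OF that], of "a i" 0] a[OF that] by simp
  show ?thesis
    by (rule sum_indep_normal[OF _ _ ind _ d]) (use n a in auto)
qed

lemma nd01: "normal_density 0 1 x = exp (- x\<^sup>2 / 2) / sqrt (2 * pi)"
  by (simp add: normal_density_def)

lemma tail_pointwise:
  fixes s x :: real assumes s: "0 \<le> s"
  shows "normal_density 0 1 x * indicator {x. s < \<bar>x\<bar>} x \<le>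
    exp (- s\<^sup>2 / 2) * (normal_density 0 1 (x - s) * indicator {s<..} x
       + normal_density 0 1 (x + s) * indicator {..< -s} x)"
proof -
  have sp: "0 < sqrt (2 * pi)" by simp
  consider "s < x" | "x < -s" | "\<bar>x\<bar> \<le> s" by linarith
  then show ?thesis
  proof cases
    case 1
    have "exp (- x\<^sup>2 / 2) \<le> exp (- s\<^sup>2 / 2) * exp (- (x - s)\<^sup>2 / 2)"
      unfolding mult_exp_exp using 1 s using mult_left_mono[of s x s] mult_left_mono[of s "-x" s] by (simp add: power2_eq_square algebra_simps)
    then show ?thesis using 1 s sp by (simp add: nd01 indicator_def divide_right_mono)
  next
    case 2
    have "exp (- x\<^sup>2 / 2) \<le> exp (- s\<^sup>2 / 2) * exp (- (x + s)\<^sup>2 / 2)"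
      unfolding mult_exp_exp using 2 s using mult_left_mono[of s x s] mult_left_mono[of s "-x" s] by (simp add: power2_eq_square algebra_simps)
    then show ?thesis using 2 s sp by (simp add: nd01 indicator_def divide_right_mono)
  next
    case 3
    then show ?thesis using s by (simp add: indicator_def)
  qed
qed

lemma tail_nn:
  fixes s :: real assumes s: "0 \<le> s"
  shows "(\<integral>\<^sup>+x. ennreal (normal_density 0 1 x * indicator {x. s < \<bar>x\<bar>} x) \<partial>lborel) \<le> ennreal (exp (- s\<^sup>2 / 2))"
proof -
  let ?f = "normal_density 0 1"
  let ?g1 = "\<lambda>x. ennreal (?f (x - s) * indicator {s<..} x)"
  let ?g2 = "\<lambda>x. ennreal (?f (x + s) * indicator {..< -s} x)"
  have "(\<integral>\<^sup>+x. ennreal (?f x * indicator {x. s < \<bar>x\<bar>} x) \<partial>lborel)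
     \<le> (\<integral>\<^sup>+x. ennreal (exp (- s\<^sup>2 / 2)) * (?g1 x + ?g2 x) \<partial>lborel)"
    apply (rule nn_integral_mono)
    using tail_pointwise[OF s]
    by (simp add: ennreal_mult'[symmetric] ennreal_plus[symmetric] del: ennreal_plus)
  also have "\<dots> = ennreal (exp (- s\<^sup>2 / 2)) * ((\<integral>\<^sup>+x. ?g1 x \<partial>lborel) + (\<integral>\<^sup>+x. ?g2 x \<partial>lborel))"
    by (subst nn_integral_cmult) (auto simp: nn_integral_add)
  also have "(\<integral>\<^sup>+x. ?g1 x \<partial>lborel) = (\<integral>\<^sup>+x. ?g1 (s + 1 * x) \<partial>lborel)"
    using nn_integral_real_affine[of ?g1 1 s] by simp
  also have "\<dots> = (\<integral>\<^sup>+x. ennreal (?f x * indicator {0<..} x) \<partial>lborel)"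
    by (rule nn_integral_cong) (simp add: indicator_def)
  also have "(\<integral>\<^sup>+x. ?g2 x \<partial>lborel) = (\<integral>\<^sup>+x. ?g2 (-s + 1 * x) \<partial>lborel)"
    using nn_integral_real_affine[of ?g2 1 "-s"] by simp
  also have "\<dots> = (\<integral>\<^sup>+x. ennreal (?f x * indicator {..<0} x) \<partial>lborel)"
    by (rule nn_integral_cong) (simp add: indicator_def)
  also have "(\<integral>\<^sup>+x. ennreal (?f x * indicator {0<..} x) \<partial>lborel) + (\<integral>\<^sup>+x. ennreal (?f x * indicator {..<0} x) \<partial>lborel)
      = (\<integral>\<^sup>+x. ennreal (?f x * indicator {0<..} x) + ennreal (?f x * indicator {..<0} x) \<partial>lborel)"
    by (rule nn_integral_add[symmetric]) auto
  also have "\<dots> \<le> (\<integral>\<^sup>+x. ennreal (?f x) \<partial>lborel)"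
    by (rule nn_integral_mono) (auto simp: indicator_def)
  also have "\<dots> = 1"
    by (subst nn_integral_eq_integral) auto
  finally show ?thesis by (simp add: mult_left_mono)
qed

lemma (in prob_space) normal_tail:
  fixes s m :: real assumes s: "0 \<le> s"
    and Y: "distributed M lborel Y (normal_density m 1)"
  shows "prob {x \<in> space M. s < \<bar>Y x - m\<bar>} \<le> exp (- s\<^sup>2 / 2)"
proof -
  have Z: "distributed M lborel (\<lambda>x. - m + 1 * Y x) (normal_density (- m + 1 * m) (\<bar>1\<bar> * 1))"
    by (rule normal_density_affine[OF Y]) auto
  hence Z': "distributed M lborel (\<lambda>x. Y x - m) (normal_density 0 1)" by simp
  have meas: "{x. s < \<bar>x\<bar>} \<in> sets lborel" by simp
  have set_eq: "{x \<in> space M. s < \<bar>Y x - m\<bar>} = (\<lambda>x. Y x - m) -` {x. s < \<bar>x\<bar>} \<inter> space M" by auto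
  have "emeasure M {x \<in> space M. s < \<bar>Y x - m\<bar>} = (\<integral>\<^sup>+x. ennreal (normal_density 0 1 x) * indicator {x. s < \<bar>x\<bar>} x \<partial>lborel)"
    unfolding set_eq by (rule distributed_emeasure[OF Z' meas])
  also have "\<dots> = (\<integral>\<^sup>+x. ennreal (normal_density 0 1 x * indicator {x. s < \<bar>x\<bar>} x) \<partial>lborel)"
    by (rule nn_integral_cong) (simp add: indicator_def)
  also have "\<dots> \<le> ennreal (exp (- s\<^sup>2 / 2))" by (rule tail_nn[OF s])
  finally show ?thesis
    by (simp add: emeasure_eq_measure ennreal_le_iff)
qed

lemma sum_split3:
  fixes g :: "nat \<Rightarrow> real"
  assumes "a \<le> b" "b \<le> c"
  shows "(\<Sum>i\<in>{Suc a..c}. g i) = (\<Sum>i\<in>{Suc a..b}. g i) + (\<Sum>i\<in>{Suc b..c}. g i)"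
proof -
  have "{Suc a..c} = {Suc a..b} \<union> {Suc b..c}" using assms by auto
  then show ?thesis by (simp add: sum.union_disjoint[symmetric] ivl_disj_int)
qed

lemma v_vals:
  assumes "1 \<le> t" "t < n"
  defines "A \<equiv> sqrt (real t * (real n - real t) / real n)"
  shows "sqrt ((real n - real t) / (real t * real n)) = A / real t"
    and "sqrt (real t / ((real n - real t) * real n)) = A / (real n - real t)"
    and "A\<^sup>2 = real t * (real n - real t) / real n"
    and "A \<ge> 0"
proof -
  define d where "d = real n - real t"
  have n: "real n = real t + d" unfolding d_def by simp
  have t: "real t > 0" and nt: "d > 0" using assms by (auto simp: d_def)
  have A2: "A\<^sup>2 = real t * d / (real t + d)" unfolding A_def n
    using t nt by simp
  have A0: "A \<ge> 0" unfolding A_def n using t nt by simp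
  show "A\<^sup>2 = real t * (real n - real t) / real n" using A2 by (simp add: n)
  show "A \<ge> 0" by (rule A0)
  show "sqrt ((real n - real t) / (real t * real n)) = A / real t"
  proof -
    have td: "real t + d \<noteq> 0" "real t \<noteq> 0" using t nt by auto
    have "(A / real t)\<^sup>2 = d / (real t * (real t + d))"
      unfolding power_divide A2 using t nt by (simp add: power2_eq_square divide_divide_eq_left mult.commute mult.left_commute)
    then show ?thesis unfolding n using A0 t by (intro real_sqrt_unique) auto
  qed
  show "sqrt (real t / ((real n - real t) * real n)) = A / (real n - real t)"
  proof -
    have td: "real t + d \<noteq> 0" "d \<noteq> 0" using t nt by auto
    have "(A / d)\<^sup>2 = real t / (d * (real t + d))"
      unfolding power_divide A2 using t nt by (simp add: power2_eq_square divide_divide_eq_left mult.commute mult.left_commute)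
    then show ?thesis unfolding n using A0 nt by (intro real_sqrt_unique) (auto simp: d_def)
  qed
qed

lemma cp_v_form:
  assumes "1 \<le> t" "t < n"
  shows "cp_v n t i = (if i \<le> t then sqrt (real t * (real n - real t) / real n) / real t
           else - (sqrt (real t * (real n - real t) / real n) / (real n - real t)))"
  using v_vals[OF assms] by (simp add: cp_v_def)

lemma cp_v_norm:
  assumes "1 \<le> t" "t < n"
  shows "(\<Sum>i\<in>{1..n}. (\<bar>cp_v n t i\<bar>)\<^sup>2) = 1"
proof -
  define A where "A = sqrt (real t * (real n - real t) / real n)"
  define d where "d = real n - real t"
  have n: "real n = real t + d" unfolding d_def by simp
  have t: "real t > 0" and nt: "d > 0" using assms by (auto simp: d_def)
  have A0: "A \<ge> 0" using v_vals(4)[OF assms] by (simp add: A_def)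
  have A2: "A\<^sup>2 = real t * d / (real t + d)" using v_vals(3)[OF assms] by (simp add: A_def d_def)
  have Ad: "sqrt (real t * d / real n) = A" by (simp add: A_def d_def)
  have "(\<Sum>i\<in>{Suc 0..n}. (\<bar>cp_v n t i\<bar>)\<^sup>2) = (\<Sum>i\<in>{Suc 0..t}. (\<bar>cp_v n t i\<bar>)\<^sup>2) + (\<Sum>i\<in>{Suc t..n}. (\<bar>cp_v n t i\<bar>)\<^sup>2)"
    using assms by (intro sum_split3) auto
  also have "(\<Sum>i\<in>{Suc 0..t}. (\<bar>cp_v n t i\<bar>)\<^sup>2) = (\<Sum>i\<in>{Suc 0..t}. (A / real t)\<^sup>2)"
    by (rule sum.cong) (use A0 in \<open>auto simp: cp_v_form[OF assms] A_def[symmetric] power2_abs\<close>)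
  also have "(\<Sum>i\<in>{Suc t..n}. (\<bar>cp_v n t i\<bar>)\<^sup>2) = (\<Sum>i\<in>{Suc t..n}. (A / d)\<^sup>2)"
    using A0 nt by (intro sum.cong) (auto simp: cp_v_form[OF assms] A_def[symmetric] d_def[symmetric] power2_abs Ad)
  also have "(\<Sum>i\<in>{Suc 0..t}. (A / real t)\<^sup>2) + (\<Sum>i\<in>{Suc t..n}. (A / d)\<^sup>2)
      = real t * (A / real t)\<^sup>2 + d * (A / d)\<^sup>2"
    using assms by (simp add: of_nat_diff d_def)
  also have "\<dots> = 1" using A2 t nt
    by (simp add: power_divide field_simps power2_eq_square)
  finally show ?thesis by simp
qed

lemma cp_mean_inner1:
  assumes "1 \<le> t" "t < n" "t \<le> \<tau>" "\<tau> \<le> n"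
  shows "(\<Sum>i\<in>{1..n}. cp_v n t i * cp_mean \<tau> \<mu>L \<mu>R i)
    = sqrt (real t * (real n - real t) / real n) * ((real n - real \<tau>) / (real n - real t)) * (\<mu>L - \<mu>R)"
proof -
  define A where "A = sqrt (real t * (real n - real t) / real n)"
  define d where "d = real n - real t"
  let ?g = "\<lambda>i. cp_v n t i * cp_mean \<tau> \<mu>L \<mu>R i"
  have n: "real n = real t + d" unfolding d_def by simp
  have t: "real t > 0" and nt: "d > 0" using assms by (auto simp: d_def)
  have "(\<Sum>i\<in>{Suc 0..n}. ?g i) = (\<Sum>i\<in>{Suc 0..t}. ?g i) + ((\<Sum>i\<in>{Suc t..\<tau>}. ?g i) + (\<Sum>i\<in>{Suc \<tau>..n}. ?g i))"
    using assms by (simp add: sum_split3[of 0 t n] sum_split3[of t \<tau> n])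
  also have "(\<Sum>i\<in>{Suc 0..t}. ?g i) = (\<Sum>i\<in>{Suc 0..t}. A / real t * \<mu>L)"
    by (rule sum.cong) (use assms in \<open>auto simp: cp_v_form[OF assms(1,2)] A_def cp_mean_def\<close>)
  also have "(\<Sum>i\<in>{Suc t..\<tau>}. ?g i) = (\<Sum>i\<in>{Suc t..\<tau>}. - (A / d) * \<mu>L)"
    by (rule sum.cong) (use assms in \<open>auto simp: cp_v_form[OF assms(1,2)] A_def d_def cp_mean_def\<close>)
  also have "(\<Sum>i\<in>{Suc \<tau>..n}. ?g i) = (\<Sum>i\<in>{Suc \<tau>..n}. - (A / d) * \<mu>R)"
    by (rule sum.cong) (use assms in \<open>auto simp: cp_v_form[OF assms(1,2)] A_def d_def cp_mean_def\<close>)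
  finally have "(\<Sum>i\<in>{Suc 0..n}. ?g i) = real t * (A / real t * \<mu>L) + ((real \<tau> - real t) * (- (A / d) * \<mu>L)
      + (real n - real \<tau>) * (- (A / d) * \<mu>R))"
    using assms by (simp add: of_nat_diff)
  also have "\<dots> = A * ((real n - real \<tau>) / d) * (\<mu>L - \<mu>R)"
    using t nt by (simp add: field_simps d_def[symmetric] n)
  finally show ?thesis by (simp add: A_def d_def)
qed

lemma cp_mean_inner2:
  assumes "1 \<le> t" "t < n" "\<tau> \<le> t" "1 \<le> \<tau>"
  shows "(\<Sum>i\<in>{1..n}. cp_v n t i * cp_mean \<tau> \<mu>L \<mu>R i)
    = sqrt (real t * (real n - real t) / real n) * (real \<tau> / real t) * (\<mu>L - \<mu>R)"
proof -
  define A where "A = sqrt (real t * (real n - real t) / real n)"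
  define d where "d = real n - real t"
  have n: "real n = real t + d" unfolding d_def by simp
  let ?g = "\<lambda>i. cp_v n t i * cp_mean \<tau> \<mu>L \<mu>R i"
  have t: "real t > 0" and nt: "d > 0" using assms by (auto simp: d_def)
  have "(\<Sum>i\<in>{Suc 0..n}. ?g i) = (\<Sum>i\<in>{Suc 0..\<tau>}. ?g i) + ((\<Sum>i\<in>{Suc \<tau>..t}. ?g i) + (\<Sum>i\<in>{Suc t..n}. ?g i))"
    using assms by (simp add: sum_split3[of 0 \<tau> n] sum_split3[of \<tau> t n])
  also have "(\<Sum>i\<in>{Suc 0..\<tau>}. ?g i) = (\<Sum>i\<in>{Suc 0..\<tau>}. A / real t * \<mu>L)"
    by (rule sum.cong) (use assms in \<open>auto simp: cp_v_form[OF assms(1,2)] A_def cp_mean_def\<close>)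
  also have "(\<Sum>i\<in>{Suc \<tau>..t}. ?g i) = (\<Sum>i\<in>{Suc \<tau>..t}. A / real t * \<mu>R)"
    by (rule sum.cong) (use assms in \<open>auto simp: cp_v_form[OF assms(1,2)] A_def cp_mean_def\<close>)
  also have "(\<Sum>i\<in>{Suc t..n}. ?g i) = (\<Sum>i\<in>{Suc t..n}. - (A / d) * \<mu>R)"
    by (rule sum.cong) (use assms in \<open>auto simp: cp_v_form[OF assms(1,2)] A_def d_def cp_mean_def\<close>)
  finally have "(\<Sum>i\<in>{Suc 0..n}. ?g i) = real \<tau> * (A / real t * \<mu>L) + ((real t - real \<tau>) * (A / real t * \<mu>R)
      + d * (- (A / d) * \<mu>R))"
    using assms by (simp add: of_nat_diff d_def)
  also have "\<dots> = A * (real \<tau> / real t) * (\<mu>L - \<mu>R)"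
    using t nt by (simp add: field_simps)
  finally show ?thesis by (simp add: A_def)
qed

lemma cp_T0_eq: "cp_T0 n = (\<lambda>q. 2 ^ q) ` {..cp_Q n} \<union> (\<lambda>q. n - 2 ^ q) ` {..cp_Q n}"
  unfolding cp_T0_def by auto

lemma cp_T0_finite: "finite (cp_T0 n)"
  unfolding cp_T0_eq by auto

lemma cp_T0_ne: "1 \<in> cp_T0 n"
  unfolding cp_T0_def by (auto intro!: exI[of _ 0])

lemma cp_pow_le:
  assumes n: "2 \<le> n" and q: "q \<le> cp_Q n"
  shows "2 * 2 ^ q \<le> n"
proof -
  have l0: "0 \<le> log 2 (real n / 2)" using n by simp
  have "real q \<le> real (cp_Q n)" using q by simp
  also have "\<dots> = of_int \<lfloor>log 2 (real n / 2)\<rfloor>" unfolding cp_Q_def using l0 by simp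
  also have "\<dots> \<le> log 2 (real n / 2)" by simp
  finally have "real q \<le> log 2 (real n / 2)" .
  hence "2 powr real q \<le> 2 powr log 2 (real n / 2)" by simp
  also have "\<dots> = real n / 2" using n by simp
  finally have "(2::real) ^ q \<le> real n / 2" by (simp add: powr_realpow)
  hence "real (2 * 2 ^ q) \<le> real n" by simp
  thus ?thesis by linarith
qed

lemma cp_T0_range:
  assumes n: "2 \<le> n" and t: "t \<in> cp_T0 n"
  shows "1 \<le> t" "t < n"
proof -
  obtain q where q: "q \<le> cp_Q n" "t = 2 ^ q \<or> t = n - 2 ^ q" using t unfolding cp_T0_def by auto
  have "2 * 2 ^ q \<le> n" by (rule cp_pow_le[OF n q(1)])
  moreover have "(1::nat) \<le> 2 ^ q" by simp
  ultimately show "1 \<le> t" "t < n" using q(2) by (elim disjE; linarith)+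
qed

lemma cp_exists_q:
  assumes n: "2 \<le> n" and u: "1 \<le> u" "2 * u \<le> n"
  shows "\<exists>q \<le> cp_Q n. 2 ^ q \<le> u \<and> u < 2 * 2 ^ q"
proof -
  obtain q where q: "2 ^ q \<le> u" "u < 2 ^ (q + 1)" using ex_power_ivl1[of 2 u] u by auto
  have "real q = log 2 (2 ^ q)" by (simp add: log_nat_power)
  also have "\<dots> \<le> log 2 (real n / 2)"
  proof -
    have h: "2 * 2 ^ q \<le> n" using q(1) u by linarith
    have "real (2 * 2 ^ q) \<le> real n" using h by (rule of_nat_mono)
    hence "(2::real) ^ q \<le> real n / 2" by simp
    thus ?thesis using n by (subst log_le_cancel_iff) auto
  qed
  finally have "real q \<le> log 2 (real n / 2)" .
  hence "int q \<le> \<lfloor>log 2 (real n / 2)\<rfloor>" by (simp add: le_floor_iff)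
  hence "q \<le> cp_Q n" unfolding cp_Q_def by linarith
  thus ?thesis using q by auto
qed

lemma inner_distr:
  assumes n: "2 \<le> n" and t: "t \<in> cp_T0 n"
  shows "distributed (cp_law n \<tau> \<mu>L \<mu>R) lborel (cp_inner n t)
     (normal_density (\<Sum>i\<in>{1..n}. cp_v n t i * cp_mean \<tau> \<mu>L \<mu>R i) 1)"
proof -
  have t1: "1 \<le> t" "t < n" using cp_T0_range[OF n t] by auto
  have A: "sqrt (real t * (real n - real t) / real n) > 0" using t1 by auto
  have a: "cp_v n t i \<noteq> 0" for i using A t1 by (auto simp: cp_v_form[OF t1])
  have "distributed (cp_law n \<tau> \<mu>L \<mu>R) lborel (\<lambda>x. \<Sum>i\<in>{1..n}. cp_v n t i * x i)
     (normal_density (\<Sum>i\<in>{1..n}. cp_v n t i * cp_mean \<tau> \<mu>L \<mu>R i) (sqrt (\<Sum>i\<in>{1..n}. (\<bar>cp_v n t i\<bar>)\<^sup>2)))"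
    by (rule cp_lin) (use n a in auto)
  then show ?thesis unfolding cp_v_norm[OF t1] by (simp add: cp_inner_def[abs_def])
qed

lemma inner_meas:
  "cp_inner n t \<in> borel_measurable (cp_law n \<tau> \<mu>L \<mu>R)"
  unfolding cp_inner_def[abs_def] cp_law_def by measurable

lemma inner_tail:
  assumes n: "2 \<le> n" and t: "t \<in> cp_T0 n" and s: "0 \<le> s"
  shows "measure (cp_law n \<tau> \<mu>L \<mu>R) {x \<in> space (cp_law n \<tau> \<mu>L \<mu>R).
      s < \<bar>cp_inner n t x - (\<Sum>i\<in>{1..n}. cp_v n t i * cp_mean \<tau> \<mu>L \<mu>R i)\<bar>} \<le> exp (- s\<^sup>2 / 2)"
proof -
  interpret prob_space "cp_law n \<tau> \<mu>L \<mu>R" by (rule cp_law_prob)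
  show ?thesis by (rule normal_tail[OF s inner_distr[OF n t]])
qed

lemma real_key:
  fixes t u n D L :: real
  assumes "0 < t" "0 < u" "u < n" "t < n" "t \<le> u" "u < 2 * t" "2 * u \<le> n" "0 \<le> D"
    and h: "D * u * (n - u) / n > 24 * L"
  shows "t * (n - u)\<^sup>2 * D / (n * (n - t)) > 8 * L"
proof -
  have k: "3 * t * (n - u) \<ge> u * (n - t)"
  proof -
    have "2 * t * (3 * n - 2 * u) \<ge> u * (3 * n - 2 * u)"
      using assms by (intro mult_right_mono) auto
    moreover have "2 * u * u \<le> n * u" using assms by (intro mult_right_mono) auto
    ultimately show ?thesis by (simp add: algebra_simps)
  qed
  have nt: "n - t > 0" "n > 0" using assms by auto
  have "t * (n - u)\<^sup>2 * D / (n * (n - t)) = (t * (n - u) / (n - t)) * ((n - u) * D / n)"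
    using nt by (simp add: power2_eq_square field_simps)
  also have "\<dots> \<ge> (u / 3) * ((n - u) * D / n)"
  proof (rule mult_right_mono)
    show "0 \<le> (n - u) * D / n" using assms by simp
    show "u / 3 \<le> t * (n - u) / (n - t)" using k nt by (simp add: field_simps)
  qed
  finally show ?thesis using h by (simp add: field_simps)
qed

lemma msq1:
  fixes A t d n w D :: real
  assumes "A\<^sup>2 = t * d / n" "d > 0" "n > 0"
  shows "(A * (w / d) * \<Delta>)\<^sup>2 = t * w\<^sup>2 * \<Delta>\<^sup>2 / (n * d)"
  unfolding power_mult_distrib power_divide assms(1) using assms(2,3)
  by (simp add: field_simps power2_eq_square)

lemma msq2:
  fixes A t d n w D :: real
  assumes "A\<^sup>2 = t * d / n" "t > 0" "n > 0"
  shows "(A * (w / t) * \<Delta>)\<^sup>2 = d * w\<^sup>2 * \<Delta>\<^sup>2 / (n * t)"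
  unfolding power_mult_distrib power_divide assms(1) using assms(2,3)
  by (simp add: field_simps power2_eq_square)

lemma mean_zero:
  assumes n: "2 \<le> n" and t: "t \<in> cp_T0 n" and tau: "1 \<le> \<tau>" "\<tau> \<le> n"
  shows "(\<Sum>i\<in>{1..n}. cp_v n t i * cp_mean \<tau> \<mu> \<mu> i) = 0"
proof -
  have t1: "1 \<le> t" "t < n" using cp_T0_range[OF n t] by auto
  show ?thesis
  proof (cases "t \<le> \<tau>")
    case True
    show ?thesis using cp_mean_inner1[OF t1 True tau(2)] by simp
  next
    case False
    show ?thesis using cp_mean_inner2[OF t1 _ tau(1)] False by simp
  qed
qed

lemma mean_big:
  assumes n: "2 \<le> n" and tau: "1 \<le> \<tau>" "\<tau> < n"
    and h: "(\<mu>L - \<mu>R)\<^sup>2 * real \<tau> * (real n - real \<tau>) / real n > 24 * L"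
  shows "\<exists>t \<in> cp_T0 n. (\<Sum>i\<in>{1..n}. cp_v n t i * cp_mean \<tau> \<mu>L \<mu>R i)\<^sup>2 > 8 * L"
proof (cases "2 * \<tau> \<le> n")
  case True
  obtain q where q: "q \<le> cp_Q n" "2 ^ q \<le> \<tau>" "\<tau> < 2 * 2 ^ q"
    using cp_exists_q[OF n tau(1) True] by auto
  define t where "t = (2::nat) ^ q"
  have tT: "t \<in> cp_T0 n" unfolding t_def cp_T0_def using q by auto
  have t1: "1 \<le> t" "t < n" using cp_T0_range[OF n tT] by auto
  have tt: "t \<le> \<tau>" "\<tau> < 2 * t" using q by (auto simp: t_def)
  define A where "A = sqrt (real t * (real n - real t) / real n)"
  have A2: "A\<^sup>2 = real t * (real n - real t) / real n" using v_vals(3)[OF t1] by (simp add: A_def)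
  have "(\<Sum>i\<in>{1..n}. cp_v n t i * cp_mean \<tau> \<mu>L \<mu>R i)\<^sup>2
      = (A * ((real n - real \<tau>) / (real n - real t)) * (\<mu>L - \<mu>R))\<^sup>2"
    using cp_mean_inner1[OF t1 tt(1)] tau by (simp add: A_def)
  also have "\<dots> = real t * (real n - real \<tau>)\<^sup>2 * (\<mu>L - \<mu>R)\<^sup>2 / (real n * (real n - real t))"
    by (rule msq1[OF A2]) (use t1 in auto)
  also have "\<dots> > 8 * L"
    by (rule real_key[OF _ _ _ _ _ _ _ _ h[simplified mult.assoc[symmetric]]]) (use t1 tt tau True in auto)
  finally show ?thesis using tT by auto
next
  case False
  have u: "1 \<le> n - \<tau>" "2 * (n - \<tau>) \<le> n" using False tau by auto
  obtain q where q: "q \<le> cp_Q n" "2 ^ q \<le> n - \<tau>" "n - \<tau> < 2 * 2 ^ q"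
    using cp_exists_q[OF n u] by auto
  define t where "t = n - (2::nat) ^ q"
  have tT: "t \<in> cp_T0 n" unfolding t_def cp_T0_def using q by auto
  have t1: "1 \<le> t" "t < n" using cp_T0_range[OF n tT] by auto
  have tt: "\<tau> \<le> t" "n - \<tau> < 2 * (n - t)" "n - t = 2 ^ q" using q t1 by (auto simp: t_def)
  define A where "A = sqrt (real t * (real n - real t) / real n)"
  have A2: "A\<^sup>2 = real t * (real n - real t) / real n" using v_vals(3)[OF t1] by (simp add: A_def)
  have "(\<Sum>i\<in>{1..n}. cp_v n t i * cp_mean \<tau> \<mu>L \<mu>R i)\<^sup>2
      = (A * (real \<tau> / real t) * (\<mu>L - \<mu>R))\<^sup>2"
    using cp_mean_inner2[OF t1 tt(1) tau(1)] by (simp add: A_def)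
  also have "\<dots> = (real n - real t) * (real \<tau>)\<^sup>2 * (\<mu>L - \<mu>R)\<^sup>2 / (real n * real t)"
    by (rule msq2[OF A2]) (use t1 in auto)
  also have "\<dots> = (real n - real t) * (real n - (real n - real \<tau>))\<^sup>2 * (\<mu>L - \<mu>R)\<^sup>2 / (real n * (real n - (real n - real t)))"
    by simp
  also have "\<dots> > 8 * L"
  proof (rule real_key)
    show "(\<mu>L - \<mu>R)\<^sup>2 * (real n - real \<tau>) * (real n - (real n - real \<tau>)) / real n > 24 * L"
      using h by (simp add: algebra_simps)
  qed (use t1 tt tau False in \<open>auto simp: of_nat_diff\<close>)
  finally show ?thesis using tT by auto
qed

theorem lemmaA2:
  fixes \<epsilon> \<mu>L \<mu>R :: real and n \<tau> :: nat
  assumes "0 < \<epsilon>" "\<epsilon> < 1" "2 \<le> n" "1 \<le> \<tau>" "\<tau> \<le> n - 1"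
  defines "\<eta> \<equiv> real \<tau> / real n"
  defines "c \<equiv> sqrt (2 * ln (real (card (cp_T0 n)) / \<epsilon>))"
  shows "(\<mu>L = \<mu>R \<longrightarrow>
           measure (cp_law n \<tau> \<mu>L \<mu>R)
             {X \<in> space (cp_law n \<tau> \<mu>L \<mu>R). cp_stat n X > c} \<le> \<epsilon>)
       \<and> (\<bar>\<mu>L - \<mu>R\<bar> * sqrt (\<eta> * (1 - \<eta>)) >
              sqrt (24 * ln (real (card (cp_T0 n)) / \<epsilon>) / real n) \<longrightarrow>
           measure (cp_law n \<tau> \<mu>L \<mu>R)
             {X \<in> space (cp_law n \<tau> \<mu>L \<mu>R). cp_stat n X \<le> c} \<le> \<epsilon>)"
proof -
  note eps = assms(1,2) and n = assms(3) and tau = assms(4,5)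
  have tau': "1 \<le> \<tau>" "\<tau> < n" "\<tau> \<le> n" using tau n by auto
  define M where "M = cp_law n \<tau> \<mu>L \<mu>R"
  interpret prob_space M unfolding M_def by (rule cp_law_prob)
  define K where "K = real (card (cp_T0 n))"
  define L where "L = ln (K / \<epsilon>)"
  define m where "m t = (\<Sum>i\<in>{1..n}. cp_v n t i * cp_mean \<tau> \<mu>L \<mu>R i)" for t
  have fin: "finite (cp_T0 n)" by (rule cp_T0_finite)
  have ne: "cp_T0 n \<noteq> {}" using cp_T0_ne by auto
  have K1: "K \<ge> 1" proof -
    have "card (cp_T0 n) > 0" using fin ne by (simp add: card_gt_0_iff)
    thus ?thesis unfolding K_def by linarith
  qed
  have "K / \<epsilon> > 1" using K1 eps by (simp add: field_simps)
  hence L0: "L > 0" unfolding L_def by simp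
  have c_eq: "c = sqrt (2 * L)" unfolding c_def L_def K_def ..
  have c0: "c \<ge> 0" unfolding c_eq using L0 by simp
  have c2: "c\<^sup>2 = 2 * L" unfolding c_eq using L0 by simp
  have ec: "exp (- c\<^sup>2 / 2) = \<epsilon> / K"
    unfolding c2 L_def using K1 eps by (simp add: exp_minus exp_ln)
  have eK: "\<epsilon> / K \<le> \<epsilon>" using K1 eps by (simp add: field_simps)
  have tail: "measure M {x \<in> space M. c < \<bar>cp_inner n t x - m t\<bar>} \<le> \<epsilon> / K" if "t \<in> cp_T0 n" for t
    using inner_tail[OF n that c0, of \<tau> \<mu>L \<mu>R] unfolding M_def m_def ec .
  have evs: "{x \<in> space M. c < \<bar>cp_inner n t x - m t\<bar>} \<in> sets M" for t
    using inner_meas[of n t \<tau> \<mu>L \<mu>R] unfolding M_def[symmetric] by measurable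
  have stat_ge: "\<bar>cp_inner n t X\<bar> \<le> cp_stat n X" if "t \<in> cp_T0 n" for t X
    unfolding cp_stat_def using fin that by (intro Max_ge) auto
  have part_a: "measure M {X \<in> space M. cp_stat n X > c} \<le> \<epsilon>" if eq: "\<mu>L = \<mu>R"
  proof -
    have m0: "m t = 0" if "t \<in> cp_T0 n" for t
      unfolding m_def eq by (rule mean_zero[OF n that tau'(1,3)])
    have sub: "{X \<in> space M. cp_stat n X > c} \<subseteq> (\<Union>t\<in>cp_T0 n. {x \<in> space M. c < \<bar>cp_inner n t x - m t\<bar>})"
    proof
      fix X assume X: "X \<in> {X \<in> space M. cp_stat n X > c}"
      then have "c < Max ((\<lambda>t. \<bar>cp_inner n t X\<bar>) ` cp_T0 n)" by (simp add: cp_stat_def)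
      then obtain t where "t \<in> cp_T0 n" "c < \<bar>cp_inner n t X\<bar>" using fin ne by (auto simp: Max_gr_iff)
      then show "X \<in> (\<Union>t\<in>cp_T0 n. {x \<in> space M. c < \<bar>cp_inner n t x - m t\<bar>})" using X m0 by auto
    qed
    have "measure M {X \<in> space M. cp_stat n X > c} \<le> measure M (\<Union>t\<in>cp_T0 n. {x \<in> space M. c < \<bar>cp_inner n t x - m t\<bar>})"
      by (rule finite_measure_mono[OF sub]) (use fin evs in auto)
    also have "\<dots> \<le> (\<Sum>t\<in>cp_T0 n. measure M {x \<in> space M. c < \<bar>cp_inner n t x - m t\<bar>})"
      by (rule finite_measure_subadditive_finite) (use fin evs in auto)
    also have "\<dots> \<le> (\<Sum>t\<in>cp_T0 n. \<epsilon> / K)" by (rule sum_mono) (rule tail)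
    also have "\<dots> = \<epsilon>" using K1 by (simp add: K_def[symmetric])
    finally show ?thesis .
  qed
  have part_b: "measure M {X \<in> space M. cp_stat n X \<le> c} \<le> \<epsilon>"
    if H: "\<bar>\<mu>L - \<mu>R\<bar> * sqrt (\<eta> * (1 - \<eta>)) > sqrt (24 * L / real n)"
  proof -
    have eta: "0 < \<eta>" "\<eta> < 1" unfolding \<eta>_def using tau' by auto
    have "(sqrt (24 * L / real n))\<^sup>2 < (\<bar>\<mu>L - \<mu>R\<bar> * sqrt (\<eta> * (1 - \<eta>)))\<^sup>2"
      by (rule power_strict_mono[OF H]) (use L0 in auto)
    hence "24 * L / real n < (\<mu>L - \<mu>R)\<^sup>2 * (\<eta> * (1 - \<eta>))"
      using L0 eta by (simp add: power_mult_distrib)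
    also have "\<eta> * (1 - \<eta>) = real \<tau> * (real n - real \<tau>) / (real n * real n)"
      unfolding \<eta>_def using n by (simp add: field_simps)
    finally have "24 * L / real n < (\<mu>L - \<mu>R)\<^sup>2 * (real \<tau> * (real n - real \<tau>) / (real n * real n))" .
    hence h: "(\<mu>L - \<mu>R)\<^sup>2 * real \<tau> * (real n - real \<tau>) / real n > 24 * L"
      using n by (simp add: field_simps)
    obtain t where tT: "t \<in> cp_T0 n" and mt: "(m t)\<^sup>2 > 8 * L"
      using mean_big[OF n tau'(1,2) h] unfolding m_def by auto
    have "(2 * c)\<^sup>2 < \<bar>m t\<bar>\<^sup>2" using mt c2 by (simp add: power_mult_distrib)
    hence mc: "2 * c < \<bar>m t\<bar>" by (rule power_less_imp_less_base) simp
    have sub: "{X \<in> space M. cp_stat n X \<le> c} \<subseteq> {x \<in> space M. c < \<bar>cp_inner n t x - m t\<bar>}"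
    proof
      fix X assume X: "X \<in> {X \<in> space M. cp_stat n X \<le> c}"
      then have "\<bar>cp_inner n t X\<bar> \<le> c" using stat_ge[OF tT, of X] by auto
      then show "X \<in> {x \<in> space M. c < \<bar>cp_inner n t x - m t\<bar>}" using X mc by auto
    qed
    have "measure M {X \<in> space M. cp_stat n X \<le> c} \<le> measure M {x \<in> space M. c < \<bar>cp_inner n t x - m t\<bar>}"
      by (rule finite_measure_mono[OF sub evs])
    also have "\<dots> \<le> \<epsilon> / K" by (rule tail[OF tT])
    finally show ?thesis using eK by linarith
  qed
  show ?thesis
    using part_a part_b unfolding M_def L_def K_def by blast
qed

end
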